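(* Let $H$ be a separable infinite-dimensional Hilbert space, let $\{u_t\}_{t\in\mathbb{R}}$ be a one-parameter group of unitaries in $B(H)$, and let $\{\alpha_t\}_{t\in\mathbb{R}}$ be the group of automorphisms of $B(H)$ given by $\alpha_t(A)=u_tAu_t^*$. Then $\{u_t\}_{t\in\mathbb{R}}$ is UEC as a family of maps $H_1\to H_1$ if and only if $\{\alpha_t\}_{t\in\mathbb{R}}$ is UEC as a family of maps $B_1\to B_1$.
   Context: $H_1$ is the closed unit ball of $H$ and $B_1$ the closed unit ball of $B(H)$. $H_1$ carries the (weak) uniformity whose basic entourages are the sets $\{(x,y)\in H_1\times H_1: |\langle x-y,z_i\rangle|<\epsilon,\ i=1,\dots,N\}$ with $z_i\in H_1$, $N\in\mathbb{N}$, $\epsilon>0$; $B_1$ carries the (weak operator) uniformity whose basic entourages are the sets $\{(A,B)\in B_1\times B_1: |\langle (A-B)w_i,z_i\rangle|<\epsilon,\ i=1,\dots,N\}$ with $w_i,z_i\in H_1$, $N\in\mathbb{N}$, $\epsilon>0$ (for separable $H$ these are the uniformities of the metrizable weak, resp. weak operator, topologies on these compact balls). A family $\mathcal{F}$ of maps from a uniform space $X$ to itself is uniformly equicontinuous (UEC) if for every entourage $U$ there is an entourage $W$ such that $(x,y)\in W$ implies $(f(x),f(y))\in U$ for all $f\in\mathcal{F}$. *)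

theory Defs
  imports "HOL-Analysis.Analysis"
begin

text \<open>A complex Hilbert space is modelled by a carrier type 'h (with its additive group
structure), a complex scalar multiplication sc and an inner product ip, linear in the
first argument and conjugate-linear in the second.\<close>

definition hnorm :: "('h \<Rightarrow> 'h \<Rightarrow> complex) \<Rightarrow> 'h \<Rightarrow> real" where
  "hnorm ip x = sqrt (Re (ip x x))"

definition hilbert_space ::
  "(complex \<Rightarrow> 'h::ab_group_add \<Rightarrow> 'h) \<Rightarrow> ('h \<Rightarrow> 'h \<Rightarrow> complex) \<Rightarrow> bool" where
  "hilbert_space sc ip \<longleftrightarrow>
     vector_space sc \<and>
     (\<forall>x y z. ip (x + y) z = ip x z + ip y z) \<and>
     (\<forall>a x y. ip (sc a x) y = a * ip x y) \<and>
     (\<forall>x y. ip y x = cnj (ip x y)) \<and>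
     (\<forall>x. 0 \<le> Re (ip x x)) \<and>
     (\<forall>x. ip x x = 0 \<longrightarrow> x = 0) \<and>
     (\<forall>X :: nat \<Rightarrow> 'h. (\<forall>e>0. \<exists>N. \<forall>m\<ge>N. \<forall>n\<ge>N. hnorm ip (X m - X n) < e) \<longrightarrow>
        (\<exists>L. (\<lambda>n. hnorm ip (X n - L)) \<longlonglongrightarrow> 0))"

definition separable_hs :: "('h::ab_group_add \<Rightarrow> 'h \<Rightarrow> complex) \<Rightarrow> bool" where
  "separable_hs ip \<longleftrightarrow> (\<exists>D. countable D \<and> (\<forall>x e. e > 0 \<longrightarrow> (\<exists>d\<in>D. hnorm ip (x - d) < e)))"

definition infinite_dimensional :: "(complex \<Rightarrow> 'h::ab_group_add \<Rightarrow> 'h) \<Rightarrow> bool" where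
  "infinite_dimensional sc \<longleftrightarrow> \<not> (\<exists>B. finite B \<and> module.span sc B = UNIV)"

definition bounded_op ::
  "(complex \<Rightarrow> 'h::ab_group_add \<Rightarrow> 'h) \<Rightarrow> ('h \<Rightarrow> 'h \<Rightarrow> complex) \<Rightarrow> ('h \<Rightarrow> 'h) \<Rightarrow> bool" where
  "bounded_op sc ip T \<longleftrightarrow>
     (\<forall>x y. T (x + y) = T x + T y) \<and> (\<forall>a x. T (sc a x) = sc a (T x)) \<and>
     (\<exists>C. \<forall>x. hnorm ip (T x) \<le> C * hnorm ip x)"

definition op_norm :: "('h \<Rightarrow> 'h \<Rightarrow> complex) \<Rightarrow> ('h \<Rightarrow> 'h) \<Rightarrow> real" where
  "op_norm ip T = Sup {hnorm ip (T x) | x. hnorm ip x \<le> 1}"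

definition adjoint :: "('h \<Rightarrow> 'h \<Rightarrow> complex) \<Rightarrow> ('h \<Rightarrow> 'h) \<Rightarrow> ('h \<Rightarrow> 'h)" where
  "adjoint ip T = (THE S. \<forall>x y. ip (T x) y = ip x (S y))"

definition unitary_op ::
  "(complex \<Rightarrow> 'h::ab_group_add \<Rightarrow> 'h) \<Rightarrow> ('h \<Rightarrow> 'h \<Rightarrow> complex) \<Rightarrow> ('h \<Rightarrow> 'h) \<Rightarrow> bool" where
  "unitary_op sc ip U \<longleftrightarrow> bounded_op sc ip U \<and> surj U \<and> (\<forall>x y. ip (U x) (U y) = ip x y)"

definition one_param_unitary_group ::
  "(complex \<Rightarrow> 'h::ab_group_add \<Rightarrow> 'h) \<Rightarrow> ('h \<Rightarrow> 'h \<Rightarrow> complex) \<Rightarrow> (real \<Rightarrow> 'h \<Rightarrow> 'h) \<Rightarrow> bool" where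
  "one_param_unitary_group sc ip u \<longleftrightarrow>
     (\<forall>t. unitary_op sc ip (u t)) \<and> u 0 = id \<and> (\<forall>s t. u (s + t) = u s \<circ> u t)"

definition H1 :: "('h \<Rightarrow> 'h \<Rightarrow> complex) \<Rightarrow> 'h set" where
  "H1 ip = {x. hnorm ip x \<le> 1}"

definition B1 ::
  "(complex \<Rightarrow> 'h::ab_group_add \<Rightarrow> 'h) \<Rightarrow> ('h \<Rightarrow> 'h \<Rightarrow> complex) \<Rightarrow> ('h \<Rightarrow> 'h) set" where
  "B1 sc ip = {A. bounded_op sc ip A \<and> op_norm ip A \<le> 1}"

text \<open>Basic entourages of the weak uniformity on H_1.\<close>
definition weak_basic :: "('h::ab_group_add \<Rightarrow> 'h \<Rightarrow> complex) \<Rightarrow> ('h \<times> 'h) set set" where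
  "weak_basic ip = {{(x, y). x \<in> H1 ip \<and> y \<in> H1 ip \<and> (\<forall>i<N. cmod (ip (x - y) (z i)) < e)}
                      | (z :: nat \<Rightarrow> 'h) (N :: nat) (e :: real). (\<forall>i<N. z i \<in> H1 ip) \<and> e > 0}"

text \<open>Basic entourages of the weak operator uniformity on B_1.\<close>
definition wot_basic ::
  "(complex \<Rightarrow> 'h::ab_group_add \<Rightarrow> 'h) \<Rightarrow> ('h \<Rightarrow> 'h \<Rightarrow> complex) \<Rightarrow> (('h \<Rightarrow> 'h) \<times> ('h \<Rightarrow> 'h)) set set" where
  "wot_basic sc ip = {{(A, B). A \<in> B1 sc ip \<and> B \<in> B1 sc ip \<and>
                          (\<forall>i<N. cmod (ip (A (w i) - B (w i)) (z i)) < e)}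
                      | (w :: nat \<Rightarrow> 'h) (z :: nat \<Rightarrow> 'h) (N :: nat) (e :: real). (\<forall>i<N. w i \<in> H1 ip \<and> z i \<in> H1 ip) \<and> e > 0}"

definition entourages :: "'a set \<Rightarrow> ('a \<times> 'a) set set \<Rightarrow> ('a \<times> 'a) set set" where
  "entourages X Bs = {U. U \<subseteq> X \<times> X \<and> (\<exists>V\<in>Bs. V \<subseteq> U)}"

definition UEC :: "'a set \<Rightarrow> ('a \<times> 'a) set set \<Rightarrow> ('a \<Rightarrow> 'a) set \<Rightarrow> bool" where
  "UEC X Bs F \<longleftrightarrow>
     (\<forall>U\<in>entourages X Bs. \<exists>W\<in>entourages X Bs. \<forall>f\<in>F. \<forall>x y. (x, y) \<in> W \<longrightarrow> (f x, f y) \<in> U)"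

end

theory Submission
  imports Defs
begin



locale hs =
  fixes sc :: "complex \<Rightarrow> 'h::ab_group_add \<Rightarrow> 'h" and ip :: "'h \<Rightarrow> 'h \<Rightarrow> complex"
  assumes HS: "hilbert_space sc ip"
begin

lemma HSu: "vector_space sc \<and>
     (\<forall>x y z. ip (x + y) z = ip x z + ip y z) \<and>
     (\<forall>a x y. ip (sc a x) y = a * ip x y) \<and>
     (\<forall>x y. ip y x = cnj (ip x y)) \<and>
     (\<forall>x. 0 \<le> Re (ip x x)) \<and>
     (\<forall>x. ip x x = 0 \<longrightarrow> x = 0) \<and>
     (\<forall>X :: nat \<Rightarrow> 'h. (\<forall>e>0. \<exists>N. \<forall>m\<ge>N. \<forall>n\<ge>N. hnorm ip (X m - X n) < e) \<longrightarrow>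
        (\<exists>L. (\<lambda>n. hnorm ip (X n - L)) \<longlonglongrightarrow> 0))"
  using HS unfolding hilbert_space_def .

sublocale vector_space sc by (rule HSu[THEN conjunct1])

lemma ip_addL: "ip (x + y) z = ip x z + ip y z"
  by (rule HSu[THEN conjunct2, THEN conjunct1, rule_format])
lemma ip_scL: "ip (sc a x) y = a * ip x y"
  by (rule HSu[THEN conjunct2, THEN conjunct2, THEN conjunct1, rule_format])
lemma ip_sym: "ip y x = cnj (ip x y)"
  by (rule HSu[THEN conjunct2, THEN conjunct2, THEN conjunct2, THEN conjunct1, rule_format])
lemma ip_pos: "0 \<le> Re (ip x x)"
  by (rule HSu[THEN conjunct2, THEN conjunct2, THEN conjunct2, THEN conjunct2, THEN conjunct1, rule_format])
lemma ip_def0: "ip x x = 0 \<Longrightarrow> x = 0"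
  by (rule HSu[THEN conjunct2, THEN conjunct2, THEN conjunct2, THEN conjunct2, THEN conjunct2, THEN conjunct1, rule_format])

lemma ip_addR: "ip z (x + y) = ip z x + ip z y"
proof -
  have "ip z (x + y) = cnj (ip (x+y) z)" by (rule ip_sym)
  also have "\<dots> = cnj (ip x z) + cnj (ip y z)" by (simp only: ip_addL complex_cnj_add)
  also have "\<dots> = ip z x + ip z y" by (simp only: ip_sym[of z x, symmetric] ip_sym[of z y, symmetric])
  finally show ?thesis .
qed
lemma ip_scR: "ip x (sc a y) = cnj a * ip x y"
proof -
  have "ip x (sc a y) = cnj (ip (sc a y) x)" by (rule ip_sym)
  also have "\<dots> = cnj a * cnj (ip y x)" by (simp only: ip_scL complex_cnj_mult)
  also have "\<dots> = cnj a * ip x y" by (simp only: ip_sym[of x y, symmetric])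
  finally show ?thesis .
qed

lemma ip_sumL: "ip (sum g A) y = (\<Sum>k\<in>A. ip (g k) y)"
proof -
  interpret additive "\<lambda>x. ip x y" by standard (rule ip_addL)
  show ?thesis by (rule sum)
qed
lemma ip_diffL: "ip (x - x') y = ip x y - ip x' y"
proof -
  interpret additive "\<lambda>x. ip x y" by standard (rule ip_addL)
  show ?thesis by (rule diff)
qed
lemma ip_0L[simp]: "ip 0 y = 0"
proof -
  interpret additive "\<lambda>x. ip x y" by standard (rule ip_addL)
  show ?thesis by (rule zero)
qed
lemma ip_sumR: "ip y (sum g A) = (\<Sum>k\<in>A. ip y (g k))"
proof -
  have "ip y (sum g A) = cnj (ip (sum g A) y)" by (rule ip_sym)
  also have "\<dots> = (\<Sum>k\<in>A. cnj (ip (g k) y))" by (simp add: ip_sumL)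
  also have "\<dots> = (\<Sum>k\<in>A. ip y (g k))" by (rule sum.cong) (simp_all add: ip_sym[of _ y])
  finally show ?thesis .
qed
lemma ip_diffR: "ip y (x - x') = ip y x - ip y x'"
proof -
  have "ip y (x - x') = cnj (ip (x - x') y)" by (rule ip_sym)
  also have "\<dots> = cnj (ip x y) - cnj (ip x' y)" by (simp only: ip_diffL complex_cnj_diff)
  also have "\<dots> = ip y x - ip y x'" by (simp only: ip_sym[of y x, symmetric] ip_sym[of y x', symmetric])
  finally show ?thesis .
qed
lemma ip_0R[simp]: "ip y 0 = 0"
  using ip_sym[of 0 y] by simp

lemma ip_self_real: "ip x x = complex_of_real (Re (ip x x))"
proof -
  have h: "ip x x = cnj (ip x x)" by (rule ip_sym)
  have "Im (ip x x) = - Im (ip x x)" using arg_cong[OF h, of Im] by simp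
  then have "Im (ip x x) = 0" by simp
  then show ?thesis by (simp add: complex_eq_iff)
qed

lemma hnorm_sq: "(hnorm ip x)^2 = Re (ip x x)"
  unfolding hnorm_def using ip_pos[of x] by simp
lemma hnorm_nonneg: "0 \<le> hnorm ip x" unfolding hnorm_def using ip_pos[of x] by simp
lemma ip_self_hnorm: "ip x x = complex_of_real ((hnorm ip x)^2)"
  by (subst ip_self_real) (simp add: hnorm_sq)
lemma hnorm_zero_iff: "hnorm ip x = 0 \<longleftrightarrow> x = 0"
proof
  assume "hnorm ip x = 0" then have "ip x x = 0" using ip_self_hnorm by simp
  then show "x = 0" by (rule ip_def0)
qed (simp add: hnorm_def)

lemma hnorm_sc: "hnorm ip (sc a x) = cmod a * hnorm ip x"
proof -
  have "ip (sc a x) (sc a x) = (a * cnj a) * ip x x" by (simp add: ip_scL ip_scR)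
  also have "a * cnj a = complex_of_real ((cmod a)^2)" by (rule complex_norm_square[symmetric])
  finally have "(hnorm ip (sc a x))^2 = ((cmod a)^2) * (hnorm ip x)^2"
    by (simp add: hnorm_sq)
  then have "(hnorm ip (sc a x))^2 = (cmod a * hnorm ip x)^2" by (simp add: power_mult_distrib)
  then show ?thesis using hnorm_nonneg by (simp add: power2_eq_iff_nonneg)
qed

lemma pyth: "ip a b = 0 \<Longrightarrow> (hnorm ip (a + b))^2 = (hnorm ip a)^2 + (hnorm ip b)^2"
proof -
  assume h: "ip a b = 0"
  then have h2: "ip b a = 0" by (metis ip_sym complex_cnj_zero)
  have "ip (a+b) (a+b) = ip a a + ip b b" by (simp add: ip_addL ip_addR h h2)
  then show ?thesis by (simp add: hnorm_sq)
qed

lemma cs_unit: assumes "hnorm ip e = 1" shows "cmod (ip x e) \<le> hnorm ip x"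
proof -
  define c where "c = ip x e"
  define r where "r = x - sc c e"
  have "ip e e = complex_of_real ((hnorm ip e)^2)" by (rule ip_self_hnorm)
  then have ee: "ip e e = 1" using assms by simp
  have "ip r e = 0" by (simp add: r_def ip_diffL ip_scL ee c_def)
  then have "ip r (sc c e) = 0" by (simp add: ip_scR)
  then have "(hnorm ip (r + sc c e))^2 = (hnorm ip r)^2 + (hnorm ip (sc c e))^2" by (rule pyth)
  moreover have "r + sc c e = x" by (simp add: r_def)
  ultimately have "(hnorm ip x)^2 = (hnorm ip r)^2 + (cmod c)^2" using assms by (simp add: hnorm_sc)
  then have "(cmod c)^2 \<le> (hnorm ip x)^2" by simp
  then have "cmod c \<le> hnorm ip x" by (rule power2_le_imp_le[OF _ hnorm_nonneg])
  then show ?thesis unfolding c_def .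
qed

lemma cs: "cmod (ip x y) \<le> hnorm ip x * hnorm ip y"
proof (cases "y = 0")
  case True then show ?thesis by (simp add: hnorm_def)
next
  case False
  then have hy: "hnorm ip y > 0" using hnorm_zero_iff[of y] hnorm_nonneg[of y] by linarith
  define e where "e = sc (complex_of_real (1 / hnorm ip y)) y"
  have he: "hnorm ip e = 1" using hy by (simp add: e_def hnorm_sc norm_divide)
  have "y = sc (complex_of_real (hnorm ip y)) e" using hy by (simp add: e_def)
  then have "ip x y = complex_of_real (hnorm ip y) * ip x e" using ip_scR[of x "complex_of_real (hnorm ip y)" e] by simp
  then have "cmod (ip x y) = hnorm ip y * cmod (ip x e)" using hy by (simp add: norm_mult)
  also have "\<dots> \<le> hnorm ip y * hnorm ip x" using cs_unit[OF he] hy by simp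
  finally show ?thesis by (simp add: mult.commute)
qed

end



context hs begin

definition orthon :: "nat \<Rightarrow> (nat \<Rightarrow> 'h) \<Rightarrow> bool" where
  "orthon m E \<longleftrightarrow> (\<forall>k<m. ip (E k) (E k) = 1) \<and> (\<forall>k<m. \<forall>l<m. k \<noteq> l \<longrightarrow> ip (E k) (E l) = 0)"

definition proj :: "nat \<Rightarrow> (nat \<Rightarrow> 'h) \<Rightarrow> 'h \<Rightarrow> 'h" where
  "proj m E y = (\<Sum>k<m. sc (ip y (E k)) (E k))"

lemma proj_ip: assumes "orthon m E" "j < m" shows "ip (proj m E y) (E j) = ip y (E j)"
proof -
  have "ip (proj m E y) (E j) = (\<Sum>k<m. ip y (E k) * ip (E k) (E j))"
    by (simp add: proj_def ip_sumL ip_scL)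
  also have "\<dots> = (\<Sum>k<m. (if k = j then ip y (E j) else 0))"
    using assms unfolding orthon_def by (intro sum.cong) auto
  also have "\<dots> = ip y (E j)" using assms(2) by simp
  finally show ?thesis .
qed

lemma res_orth: "orthon m E \<Longrightarrow> j < m \<Longrightarrow> ip (y - proj m E y) (E j) = 0"
  by (simp add: ip_diffL proj_ip)

lemma ip_orth_proj: "(\<forall>k<m. ip v (E k) = 0) \<Longrightarrow> ip v (proj m E y) = 0"
  by (simp add: proj_def ip_sumR ip_scR)

lemma proj_norms: assumes "orthon m E"
  shows "(hnorm ip y)^2 = (hnorm ip (y - proj m E y))^2 + (hnorm ip (proj m E y))^2"
proof -
  have "\<forall>k<m. ip (y - proj m E y) (E k) = 0" using res_orth[OF assms] by blast
  then have "ip (y - proj m E y) (proj m E y) = 0" by (rule ip_orth_proj)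
  then have "(hnorm ip (y - proj m E y + proj m E y))^2 = (hnorm ip (y - proj m E y))^2 + (hnorm ip (proj m E y))^2"
    by (rule pyth)
  moreover have "y - proj m E y + proj m E y = y" by simp
  ultimately show ?thesis by simp
qed

lemma proj_le: assumes "orthon m E" shows "hnorm ip (proj m E y) \<le> hnorm ip y"
proof -
  have h: "(hnorm ip y)^2 = (hnorm ip (y - proj m E y))^2 + (hnorm ip (proj m E y))^2"
    by (rule proj_norms[OF assms])
  have "0 \<le> (hnorm ip (y - proj m E y))^2" by simp
  then have "(hnorm ip (proj m E y))^2 \<le> (hnorm ip y)^2" using h by linarith
  then show ?thesis by (rule power2_le_imp_le[OF _ hnorm_nonneg])
qed

lemma res_le: assumes "orthon m E" shows "hnorm ip (y - proj m E y) \<le> hnorm ip y"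
proof -
  have h: "(hnorm ip y)^2 = (hnorm ip (y - proj m E y))^2 + (hnorm ip (proj m E y))^2"
    by (rule proj_norms[OF assms])
  have "0 \<le> (hnorm ip (proj m E y))^2" by simp
  then have "(hnorm ip (y - proj m E y))^2 \<le> (hnorm ip y)^2" using h by linarith
  then show ?thesis by (rule power2_le_imp_le[OF _ hnorm_nonneg])
qed

lemma gs: fixes n :: nat and f :: "nat \<Rightarrow> 'h" shows "\<exists>m E. orthon m E \<and> (\<forall>v. (\<forall>k<m. ip v (E k) = 0) \<longrightarrow> (\<forall>j<n. ip v (f j) = 0))"
proof (induction n)
  case 0
  show ?case by (rule exI[of _ 0]) (simp add: orthon_def)
next
  case (Suc n)
  then obtain m E where o: "orthon m E" and sp: "\<forall>v. (\<forall>k<m. ip v (E k) = 0) \<longrightarrow> (\<forall>j<n. ip v (f j) = 0)"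
    by blast
  define r where "r = f n - proj m E (f n)"
  have rE: "\<And>k. k < m \<Longrightarrow> ip r (E k) = 0" unfolding r_def using res_orth[OF o] by blast
  have fr: "f n = r + proj m E (f n)" by (simp add: r_def)
  show ?case
  proof (cases "r = 0")
    case True
    have "\<forall>v. (\<forall>k<m. ip v (E k) = 0) \<longrightarrow> (\<forall>j<Suc n. ip v (f j) = 0)"
    proof (intro allI impI)
      fix v j assume h: "\<forall>k<m. ip v (E k) = 0" and j: "j < Suc n"
      show "ip v (f j) = 0"
      proof (cases "j = n")
        case True
        have e: "f n = proj m E (f n)" using \<open>r = 0\<close> unfolding r_def by (rule right_minus_eq[THEN iffD1])
        have "ip v (f n) = ip v (proj m E (f n))" using arg_cong[where f="ip v", OF e] .
        then show ?thesis using True ip_orth_proj[OF h] by simp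
      next
        case False then show ?thesis using sp h j by simp
      qed
    qed
    then show ?thesis using o by blast
  next
    case False
    then have hr: "hnorm ip r > 0" using hnorm_zero_iff[of r] hnorm_nonneg[of r] by linarith
    define c where "c = complex_of_real (1 / hnorm ip r)"
    define E' where "E' = E(m := sc c r)"
    have cnz: "c \<noteq> 0" using hr by (simp add: c_def)
    have new_old: "ip (sc c r) (E k) = 0" if "k < m" for k using rE[OF that] by (simp add: ip_scL)
    have old_new: "ip (E k) (sc c r) = 0" if "k < m" for k
      using new_old[OF that] ip_sym[of "E k" "sc c r"] by simp
    have "ip (sc c r) (sc c r) = (c * cnj c) * ip r r" by (simp add: ip_scL ip_scR)
    also have "\<dots> = 1" using hr by (simp add: c_def ip_self_hnorm power2_eq_square)
    finally have nn: "ip (sc c r) (sc c r) = 1" .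
    have o1: "\<forall>k<m. ip (E k) (E k) = 1" and o2: "\<forall>k<m. \<forall>l<m. k \<noteq> l \<longrightarrow> ip (E k) (E l) = 0"
      using o unfolding orthon_def by blast+
    have o': "orthon (Suc m) E'"
      unfolding orthon_def
    proof (intro conjI allI impI)
      fix k assume "k < Suc m"
      then consider "k < m" | "k = m" by linarith
      then show "ip (E' k) (E' k) = 1"
      proof cases
        case 1 then show ?thesis using o1 by (simp add: E'_def)
      next
        case 2 then show ?thesis using nn by (simp add: E'_def)
      qed
    next
      fix k l assume k: "k < Suc m" and l: "l < Suc m" and kl: "k \<noteq> l"
      consider "k < m" "l < m" | "k = m" "l < m" | "k < m" "l = m" using k l kl by linarith
      then show "ip (E' k) (E' l) = 0"
      proof cases
        case 1 then show ?thesis using o2 kl by (simp add: E'_def)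
      next
        case 2 then show ?thesis using new_old[of l] by (simp add: E'_def)
      next
        case 3 then show ?thesis using old_new[of k] by (simp add: E'_def)
      qed
    qed
    have "\<forall>v. (\<forall>k<Suc m. ip v (E' k) = 0) \<longrightarrow> (\<forall>j<Suc n. ip v (f j) = 0)"
    proof (intro allI impI)
      fix v j assume h: "\<forall>k<Suc m. ip v (E' k) = 0" and j: "j < Suc n"
      have h1: "\<forall>k<m. ip v (E k) = 0"
      proof (intro allI impI)
        fix k assume k: "k < m"
        then have "ip v (E' k) = 0" using h by simp
        then show "ip v (E k) = 0" using k by (simp add: E'_def)
      qed
      have "ip v (E' m) = 0" using h by simp
      then have "ip v (sc c r) = 0" by (simp add: E'_def)
      then have vr: "ip v r = 0" using cnz by (simp add: ip_scR)
      show "ip v (f j) = 0"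
      proof (cases "j = n")
        case True
        have "ip v (f n) = ip v (r + proj m E (f n))" using arg_cong[where f="ip v", OF fr] .
        then show ?thesis using True vr ip_orth_proj[OF h1] by (simp add: ip_addR)
      next
        case False then show ?thesis using sp h1 j by simp
      qed
    qed
    then show ?thesis using o' by blast
  qed
qed

end



context hs begin

lemma bop_add: "bounded_op sc ip T \<Longrightarrow> T (x + y) = T x + T y" by (simp add: bounded_op_def)
lemma bop_sc: "bounded_op sc ip T \<Longrightarrow> T (sc a x) = sc a (T x)" by (simp add: bounded_op_def)
lemma bop_zero: "bounded_op sc ip T \<Longrightarrow> T 0 = 0"
  using bop_add[of T 0 0] by simp
lemma bop_diff: "bounded_op sc ip T \<Longrightarrow> T (x - y) = T x - T y"
  using bop_add[of T "x - y" y] by (simp add: eq_diff_eq)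
lemma bop_sum: "bounded_op sc ip T \<Longrightarrow> T (sum g A) = (\<Sum>k\<in>A. T (g k))"
  by (induct A rule: infinite_finite_induct) (simp_all add: bop_zero bop_add)

lemma B1_bound: assumes "T \<in> B1 sc ip" shows "hnorm ip (T x) \<le> hnorm ip x"
proof -
  have b: "bounded_op sc ip T" and on: "op_norm ip T \<le> 1" using assms by (auto simp: B1_def)
  obtain C where C: "\<And>x. hnorm ip (T x) \<le> C * hnorm ip x" using b unfolding bounded_op_def by blast
  define S where "S = {hnorm ip (T x) |x. hnorm ip x \<le> 1}"
  have bdd: "bdd_above S"
  proof (rule bdd_aboveI)
    fix s assume "s \<in> S"
    then obtain y where s: "s = hnorm ip (T y)" and y: "hnorm ip y \<le> 1" by (auto simp: S_def)
    have "C * hnorm ip y \<le> \<bar>C\<bar> * hnorm ip y" by (rule mult_right_mono) (simp_all add: hnorm_nonneg)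
    also have "\<dots> \<le> \<bar>C\<bar>" using y by (simp add: mult_left_le)
    finally have "C * hnorm ip y \<le> \<bar>C\<bar>" .
    then show "s \<le> \<bar>C\<bar>" using C[of y] s by linarith
  qed
  show ?thesis
  proof (cases "x = 0")
    case True then show ?thesis using bop_zero[OF b] by (simp add: hnorm_def)
  next
    case False
    then have hx: "hnorm ip x > 0" using hnorm_zero_iff[of x] hnorm_nonneg[of x] by linarith
    define c where "c = complex_of_real (1 / hnorm ip x)"
    have "hnorm ip (sc c x) = 1" using hx by (simp add: c_def hnorm_sc norm_divide)
    then have "\<exists>y. hnorm ip (T (sc c x)) = hnorm ip (T y) \<and> hnorm ip y \<le> 1"
      by (intro exI[of _ "sc c x"]) simp
    then have "hnorm ip (T (sc c x)) \<in> S" unfolding S_def by simp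
    then have "hnorm ip (T (sc c x)) \<le> Sup S" using bdd by (rule cSup_upper)
    also have "Sup S = op_norm ip T" by (simp add: S_def op_norm_def)
    finally have f1: "hnorm ip (T (sc c x)) \<le> op_norm ip T" .
    have eq: "hnorm ip (T (sc c x)) = hnorm ip (T x) / hnorm ip x"
      using hx by (simp add: bop_sc[OF b] hnorm_sc c_def norm_divide)
    have "hnorm ip (T x) / hnorm ip x \<le> 1" using f1 on eq by linarith
    then show ?thesis using hx by (simp add: pos_divide_le_eq)
  qed
qed

lemma B1_intro: assumes "bounded_op sc ip T" "\<And>x. hnorm ip (T x) \<le> hnorm ip x"
  shows "T \<in> B1 sc ip"
proof -
  have "op_norm ip T \<le> 1" unfolding op_norm_def
  proof (rule cSup_least)
    have "hnorm ip (T 0) \<in> {hnorm ip (T x) |x. hnorm ip x \<le> 1}" by (auto simp: hnorm_def)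
    then show "{hnorm ip (T x) |x. hnorm ip x \<le> 1} \<noteq> {}" by blast
  next
    fix s assume "s \<in> {hnorm ip (T x) |x. hnorm ip x \<le> 1}"
    then obtain y where "s = hnorm ip (T y)" "hnorm ip y \<le> 1" by blast
    then show "s \<le> 1" using assms(2)[of y] by linarith
  qed
  then show ?thesis using assms by (simp add: B1_def)
qed

lemma ip_ext: "(\<And>x. ip x a = ip x b) \<Longrightarrow> a = b"
proof -
  assume h: "\<And>x. ip x a = ip x b"
  have "ip (a - b) (a - b) = 0" using h[of "a - b"] by (simp add: ip_diffR)
  then have "a - b = 0" by (rule ip_def0)
  then show "a = b" by simp
qed

end

locale upg = hs +
  fixes u :: "real \<Rightarrow> 'a \<Rightarrow> 'a"
  assumes UG: "one_param_unitary_group sc ip u"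
begin

lemma u_un: "unitary_op sc ip (u t)" using UG by (simp add: one_param_unitary_group_def)
lemma u_bop: "bounded_op sc ip (u t)" using u_un[of t] by (simp add: unitary_op_def)
lemma u_ip: "ip (u t x) (u t y) = ip x y" using u_un[of t] by (simp add: unitary_op_def)
lemma u_inv1: "u t (u (-t) x) = x"
proof -
  have "u (t + -t) = u t \<circ> u (-t)" using UG unfolding one_param_unitary_group_def by blast
  moreover have "u 0 = id" using UG unfolding one_param_unitary_group_def by blast
  ultimately have "u t \<circ> u (-t) = id" by simp
  then show ?thesis by (metis comp_apply id_apply)
qed
lemma u_inv2: "u (-t) (u t x) = x" using u_inv1[of "-t" x] by simp
lemma u_hnorm: "hnorm ip (u t x) = hnorm ip x" by (simp add: hnorm_def u_ip)
lemma u_H1: "x \<in> H1 ip \<Longrightarrow> u t x \<in> H1 ip" by (simp add: H1_def u_hnorm)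
lemma u_adj: "ip (u t x) y = ip x (u (-t) y)"
  using u_ip[of t x "u (-t) y"] by (simp add: u_inv1)

lemma adj_u: "adjoint ip (u t) = u (-t)"
  unfolding adjoint_def
proof (rule the_equality)
  show "\<forall>x y. ip (u t x) y = ip x (u (- t) y)" by (simp add: u_adj)
next
  fix S assume h: "\<forall>x y. ip (u t x) y = ip x (S y)"
  show "S = u (-t)"
  proof
    fix y show "S y = u (-t) y"
    proof (rule ip_ext)
      fix x show "ip x (S y) = ip x (u (-t) y)" using h[rule_format, of x y] u_adj[of t x y] by simp
    qed
  qed
qed

lemma alpha_B1: assumes "A \<in> B1 sc ip" shows "u t \<circ> A \<circ> adjoint ip (u t) \<in> B1 sc ip"
proof -
  have bA: "bounded_op sc ip A" using assms by (simp add: B1_def)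
  have bnd: "hnorm ip ((u t \<circ> A \<circ> u (-t)) x) \<le> hnorm ip x" for x
  proof -
    have "hnorm ip ((u t \<circ> A \<circ> u (-t)) x) = hnorm ip (A (u (-t) x))" by (simp add: u_hnorm)
    also have "\<dots> \<le> hnorm ip (u (-t) x)" by (rule B1_bound[OF assms])
    also have "\<dots> = hnorm ip x" by (rule u_hnorm)
    finally show ?thesis .
  qed
  have b: "bounded_op sc ip (u t \<circ> A \<circ> u (-t))"
    unfolding bounded_op_def
  proof (intro conjI allI)
    fix x y show "(u t \<circ> A \<circ> u (-t)) (x + y) = (u t \<circ> A \<circ> u (-t)) x + (u t \<circ> A \<circ> u (-t)) y"
      by (simp add: bop_add[OF u_bop] bop_add[OF bA])
  next
    fix a x show "(u t \<circ> A \<circ> u (-t)) (sc a x) = sc a ((u t \<circ> A \<circ> u (-t)) x)"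
      by (simp add: bop_sc[OF u_bop] bop_sc[OF bA])
  next
    show "\<exists>C. \<forall>x. hnorm ip ((u t \<circ> A \<circ> u (-t)) x) \<le> C * hnorm ip x"
      using bnd by (intro exI[of _ 1]) simp
  qed
  have "u t \<circ> A \<circ> u (-t) \<in> B1 sc ip"
    by (rule B1_intro[OF b]) (rule bnd)
  then show ?thesis by (simp add: adj_u)
qed

end



context hs begin

lemma orthon_hnorm: "orthon m E \<Longrightarrow> k < m \<Longrightarrow> hnorm ip (E k) = 1"
  unfolding orthon_def hnorm_def by simp

lemma tri3: "cmod (x + y - z) \<le> cmod x + cmod y + cmod z"
proof -
  have "cmod (x + y - z) \<le> cmod (x + y) + cmod z" by (rule norm_triangle_ineq4)
  also have "\<dots> \<le> cmod x + cmod y + cmod z" using norm_triangle_ineq[of x y] by linarith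
  finally show ?thesis .
qed

lemma est:
  assumes AB: "A \<in> B1 sc ip" "B \<in> B1 sc ip" and o: "orthon m E"
    and a: "hnorm ip a \<le> 1" and b: "hnorm ip b \<le> 1"
    and ra: "hnorm ip (a - proj m E a) \<le> \<epsilon>" and rb: "hnorm ip (b - proj m E b) \<le> \<epsilon>"
    and h: "\<forall>l<m. \<forall>k<m. cmod (ip (A (E l) - B (E l)) (E k)) \<le> \<delta>"
  shows "cmod (ip (A a - B a) b) \<le> 4 * \<epsilon> + real (m * m) * \<delta>"
proof -
  have bA: "bounded_op sc ip A" and bB: "bounded_op sc ip B" using AB by (auto simp: B1_def)
  define Pa where "Pa = proj m E a"
  define Pb where "Pb = proj m E b"
  define Ra where "Ra = a - Pa"
  define Rb where "Rb = b - Pb"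
  have aeq: "a = Pa + Ra" and beq: "b = Pb + Rb" by (simp_all add: Ra_def Rb_def)
  have hRa: "hnorm ip Ra \<le> \<epsilon>" using ra by (simp add: Ra_def Pa_def)
  have hRb: "hnorm ip Rb \<le> \<epsilon>" using rb by (simp add: Rb_def Pb_def)
  have hPa: "hnorm ip Pa \<le> 1" using proj_le[OF o, of a] a by (simp add: Pa_def)
  have hb: "hnorm ip b \<le> 1" by (rule b)
  define D where "D = (\<lambda>v. A v - B v)"
  have Dsplit: "A a - B a = D Pa + (A Ra - B Ra)"
    using bop_add[OF bA, of Pa Ra] bop_add[OF bB, of Pa Ra] aeq by (simp add: D_def algebra_simps)
  have e1: "ip (A a - B a) b = ip (D Pa) b + ip (A Ra) b - ip (B Ra) b"
    by (simp add: Dsplit ip_addL ip_diffL)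
  have e2: "ip (D Pa) b = ip (D Pa) Pb + ip (A Pa) Rb - ip (B Pa) Rb"
    by (subst beq) (simp add: ip_addR D_def ip_diffL)
  have t1: "cmod (ip (A Ra) b) \<le> \<epsilon>"
  proof -
    have "cmod (ip (A Ra) b) \<le> hnorm ip (A Ra) * hnorm ip b" by (rule cs)
    also have "\<dots> \<le> hnorm ip Ra * 1"
      by (rule mult_mono) (simp_all add: B1_bound[OF AB(1)] hb hnorm_nonneg)
    finally show ?thesis using hRa by simp
  qed
  have t2: "cmod (ip (B Ra) b) \<le> \<epsilon>"
  proof -
    have "cmod (ip (B Ra) b) \<le> hnorm ip (B Ra) * hnorm ip b" by (rule cs)
    also have "\<dots> \<le> hnorm ip Ra * 1"
      by (rule mult_mono) (simp_all add: B1_bound[OF AB(2)] hb hnorm_nonneg)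
    finally show ?thesis using hRa by simp
  qed
  have t3: "cmod (ip (A Pa) Rb) \<le> \<epsilon>"
  proof -
    have "cmod (ip (A Pa) Rb) \<le> hnorm ip (A Pa) * hnorm ip Rb" by (rule cs)
    also have "\<dots> \<le> 1 * \<epsilon>"
      by (rule mult_mono) (use B1_bound[OF AB(1), of Pa] hPa hRb in \<open>simp_all add: hnorm_nonneg\<close>)
    finally show ?thesis by simp
  qed
  have t4: "cmod (ip (B Pa) Rb) \<le> \<epsilon>"
  proof -
    have "cmod (ip (B Pa) Rb) \<le> hnorm ip (B Pa) * hnorm ip Rb" by (rule cs)
    also have "\<dots> \<le> 1 * \<epsilon>"
      by (rule mult_mono) (use B1_bound[OF AB(2), of Pa] hPa hRb in \<open>simp_all add: hnorm_nonneg\<close>)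
    finally show ?thesis by simp
  qed
  define c where "c = (\<lambda>l. ip a (E l))"
  define d where "d = (\<lambda>k. ip b (E k))"
  have cle: "cmod (c l) \<le> 1" if "l < m" for l
  proof -
    have "cmod (c l) \<le> hnorm ip a * hnorm ip (E l)" unfolding c_def by (rule cs)
    also have "\<dots> \<le> 1" using a orthon_hnorm[OF o that] by simp
    finally show ?thesis .
  qed
  have dle: "cmod (d k) \<le> 1" if "k < m" for k
  proof -
    have "cmod (d k) \<le> hnorm ip b * hnorm ip (E k)" unfolding d_def by (rule cs)
    also have "\<dots> \<le> 1" using b orthon_hnorm[OF o that] by simp
    finally show ?thesis .
  qed
  have DPa: "D Pa = (\<Sum>l<m. sc (c l) (D (E l)))"
  proof -
    have "A Pa = (\<Sum>l<m. sc (c l) (A (E l)))"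
      by (simp add: Pa_def proj_def bop_sum[OF bA] bop_sc[OF bA] c_def)
    moreover have "B Pa = (\<Sum>l<m. sc (c l) (B (E l)))"
      by (simp add: Pa_def proj_def bop_sum[OF bB] bop_sc[OF bB] c_def)
    ultimately show ?thesis by (simp add: D_def sum_subtractf[symmetric] scale_right_diff_distrib)
  qed
  have Pbs: "Pb = (\<Sum>k<m. sc (d k) (E k))" by (simp add: Pb_def proj_def d_def)
  have main: "ip (D Pa) Pb = (\<Sum>l<m. \<Sum>k<m. c l * cnj (d k) * ip (D (E l)) (E k))"
    by (simp add: DPa Pbs ip_sumL ip_sumR ip_scL ip_scR sum_distrib_left mult.assoc mult.left_commute) (rule sum.swap)
  have "cmod (ip (D Pa) Pb) \<le> (\<Sum>l<m. \<Sum>k<m. cmod (c l * cnj (d k) * ip (D (E l)) (E k)))"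
    unfolding main by (rule order.trans[OF norm_sum sum_mono]) (rule norm_sum)
  also have "\<dots> \<le> (\<Sum>l<m. \<Sum>k<m. \<delta>)"
  proof (rule sum_mono, rule sum_mono)
    fix l k assume l: "l \<in> {..<m}" and k: "k \<in> {..<m}"
    have hlk: "cmod (ip (D (E l)) (E k)) \<le> \<delta>" using h l k by (simp add: D_def)
    have "cmod (c l * cnj (d k) * ip (D (E l)) (E k)) = cmod (c l) * cmod (d k) * cmod (ip (D (E l)) (E k))"
      by (simp add: norm_mult)
    also have "\<dots> \<le> 1 * 1 * \<delta>"
      using cle[of l] dle[of k] l k hlk
      by (intro mult_mono) (auto intro: mult_le_one)
    finally show "cmod (c l * cnj (d k) * ip (D (E l)) (E k)) \<le> \<delta>" by simp
  qed
  also have "\<dots> = real (m * m) * \<delta>" by simp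
  finally have t0: "cmod (ip (D Pa) Pb) \<le> real (m * m) * \<delta>" .
  have n1: "cmod (ip (A a - B a) b) \<le> cmod (ip (D Pa) b) + cmod (ip (A Ra) b) + cmod (ip (B Ra) b)"
    unfolding e1 by (rule tri3)
  have n2: "cmod (ip (D Pa) b) \<le> cmod (ip (D Pa) Pb) + cmod (ip (A Pa) Rb) + cmod (ip (B Pa) Rb)"
    unfolding e2 by (rule tri3)
  show ?thesis using n1 n2 t0 t1 t2 t3 t4 by linarith
qed

lemma rank1: assumes "hnorm ip \<xi> \<le> 1" "hnorm ip p \<le> 1"
  shows "(\<lambda>v. sc (ip v \<xi>) p) \<in> B1 sc ip"
proof -
  have bnd: "hnorm ip (sc (ip v \<xi>) p) \<le> hnorm ip v" for v
  proof -
    have "hnorm ip (sc (ip v \<xi>) p) = cmod (ip v \<xi>) * hnorm ip p" by (rule hnorm_sc)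
    also have "\<dots> \<le> (hnorm ip v * hnorm ip \<xi>) * 1"
      by (rule mult_mono) (simp_all add: cs assms hnorm_nonneg)
    also have "\<dots> \<le> hnorm ip v * 1"
      by (rule mult_right_mono, rule mult_left_le) (simp_all add: assms hnorm_nonneg)
    finally show ?thesis by simp
  qed
  have "bounded_op sc ip (\<lambda>v. sc (ip v \<xi>) p)"
    unfolding bounded_op_def
  proof (intro conjI allI)
    fix x y show "sc (ip (x + y) \<xi>) p = sc (ip x \<xi>) p + sc (ip y \<xi>) p"
      by (simp add: ip_addL scale_left_distrib)
  next
    fix a x show "sc (ip (sc a x) \<xi>) p = sc a (sc (ip x \<xi>) p)" by (simp add: ip_scL)
  next
    show "\<exists>C. \<forall>x. hnorm ip (sc (ip x \<xi>) p) \<le> C * hnorm ip x" using bnd by (intro exI[of _ 1]) simp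
  qed
  then show ?thesis by (rule B1_intro) (rule bnd)
qed

lemma ent_intro: "V \<in> Bs \<Longrightarrow> V \<subseteq> X \<times> X \<Longrightarrow> V \<in> entourages X Bs"
  unfolding entourages_def by blast

end



context upg begin

lemma alpha_apply: "(u t \<circ> A \<circ> adjoint ip (u t)) x = u t (A (u (-t) x))"
  by (simp add: adj_u)

lemma dir2:
  assumes UA: "UEC (B1 sc ip) (wot_basic sc ip) ((\<lambda>t. \<lambda>A. u t \<circ> A \<circ> adjoint ip (u t)) ` UNIV)"
    and w0: "hnorm ip w0 = 1"
  shows "UEC (H1 ip) (weak_basic ip) (range u)"
  unfolding UEC_def
proof
  fix U assume "U \<in> entourages (H1 ip) (weak_basic ip)"
  then obtain V where V: "V \<in> weak_basic ip" "V \<subseteq> U" unfolding entourages_def by blast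
  obtain z and N :: nat and e where Vd: "V = {(x, y). x \<in> H1 ip \<and> y \<in> H1 ip \<and> (\<forall>i<N. cmod (ip (x - y) (z i)) < e)}"
    and zH: "\<forall>i<N. z i \<in> H1 ip" and e: "e > 0"
    using V(1) unfolding weak_basic_def mem_Collect_eq by (elim exE conjE) blast
  define Ua where "Ua = {(A, B). A \<in> B1 sc ip \<and> B \<in> B1 sc ip \<and>
                          (\<forall>i<N. cmod (ip (A ((\<lambda>_. w0) i) - B ((\<lambda>_. w0) i)) (z i)) < e)}"
  have w0H: "w0 \<in> H1 ip" using w0 by (simp add: H1_def)
  have "Ua \<in> wot_basic sc ip"
    unfolding wot_basic_def Ua_def
    by (rule CollectI, rule exI[of _ "\<lambda>_. w0"], rule exI[of _ z], rule exI[of _ N], rule exI[of _ e])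
       (simp add: w0H zH e)
  then have "Ua \<in> entourages (B1 sc ip) (wot_basic sc ip)"
    by (rule ent_intro) (auto simp: Ua_def)
  from bspec[OF UA[unfolded UEC_def] this]
  obtain Wa where Wa: "Wa \<in> entourages (B1 sc ip) (wot_basic sc ip)"
    and WaP: "\<forall>f\<in>(\<lambda>t. \<lambda>A. u t \<circ> A \<circ> adjoint ip (u t)) ` UNIV. \<forall>x y. (x, y) \<in> Wa \<longrightarrow> (f x, f y) \<in> Ua"
    by (elim bexE)
  then obtain Va where Va: "Va \<in> wot_basic sc ip" "Va \<subseteq> Wa" unfolding entourages_def by blast
  obtain w2 z2 and n :: nat and \<delta> where Vad: "Va = {(A, B). A \<in> B1 sc ip \<and> B \<in> B1 sc ip \<and>
                          (\<forall>i<n. cmod (ip (A (w2 i) - B (w2 i)) (z2 i)) < \<delta>)}"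
    and wzH: "\<forall>i<n. w2 i \<in> H1 ip \<and> z2 i \<in> H1 ip" and \<delta>: "\<delta> > 0"
    using Va(1) unfolding wot_basic_def mem_Collect_eq by (elim exE conjE) blast
  define W where "W = {(x, y). x \<in> H1 ip \<and> y \<in> H1 ip \<and> (\<forall>i<n. cmod (ip (x - y) (z2 i)) < \<delta>)}"
  have "W \<in> weak_basic ip"
    unfolding weak_basic_def W_def
    by (rule CollectI, rule exI[of _ z2], rule exI[of _ n], rule exI[of _ \<delta>]) (simp add: wzH \<delta>)
  then have WE: "W \<in> entourages (H1 ip) (weak_basic ip)"
    by (rule ent_intro) (auto simp: W_def)
  have "\<forall>f\<in>range u. \<forall>x y. (x, y) \<in> W \<longrightarrow> (f x, f y) \<in> U"
  proof (intro ballI allI impI)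
    fix f x y assume f: "f \<in> range u" and xy: "(x, y) \<in> W"
    then obtain t where ft: "f = u t" by blast
    have xH: "x \<in> H1 ip" and yH: "y \<in> H1 ip" and xys: "\<forall>i<n. cmod (ip (x - y) (z2 i)) < \<delta>"
      using xy by (auto simp: W_def)
    define \<xi> where "\<xi> = u (-t) w0"
    have h\<xi>: "hnorm ip \<xi> = 1" using w0 by (simp add: \<xi>_def u_hnorm)
    have \<xi>\<xi>: "ip \<xi> \<xi> = 1" using ip_self_hnorm[of \<xi>] h\<xi> by simp
    define R where "R = (\<lambda>p. \<lambda>v. sc (ip v \<xi>) p)"
    have RB: "R p \<in> B1 sc ip" if "p \<in> H1 ip" for p
      unfolding R_def by (rule rank1) (use h\<xi> that in \<open>simp_all add: H1_def\<close>)
    have "(R x, R y) \<in> Va"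
      unfolding Vad
    proof (simp, intro conjI allI impI)
      show "R x \<in> B1 sc ip" by (rule RB[OF xH])
      show "R y \<in> B1 sc ip" by (rule RB[OF yH])
      fix i assume i: "i < n"
      have "R x (w2 i) - R y (w2 i) = sc (ip (w2 i) \<xi>) (x - y)"
        by (simp add: R_def scale_right_diff_distrib)
      then have "ip (R x (w2 i) - R y (w2 i)) (z2 i) = ip (w2 i) \<xi> * ip (x - y) (z2 i)"
        by (simp add: ip_scL)
      then have "cmod (ip (R x (w2 i) - R y (w2 i)) (z2 i)) = cmod (ip (w2 i) \<xi>) * cmod (ip (x - y) (z2 i))"
        by (simp add: norm_mult)
      also have "\<dots> \<le> 1 * cmod (ip (x - y) (z2 i))"
      proof (rule mult_right_mono)
        have "cmod (ip (w2 i) \<xi>) \<le> hnorm ip (w2 i) * hnorm ip \<xi>" by (rule cs)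
        also have "\<dots> \<le> 1" using wzH i h\<xi> by (simp add: H1_def)
        finally show "cmod (ip (w2 i) \<xi>) \<le> 1" .
      qed simp
      also have "\<dots> < \<delta>" using xys i by simp
      finally show "cmod (ip (R x (w2 i) - R y (w2 i)) (z2 i)) < \<delta>" .
    qed
    then have RW: "(R x, R y) \<in> Wa" using Va by blast
    have "(\<lambda>A. u t \<circ> A \<circ> adjoint ip (u t)) \<in> (\<lambda>t. \<lambda>A. u t \<circ> A \<circ> adjoint ip (u t)) ` UNIV" by blast
    from this RW have "(u t \<circ> R x \<circ> adjoint ip (u t), u t \<circ> R y \<circ> adjoint ip (u t)) \<in> Ua"
      by (rule WaP[rule_format])
    then have hU: "\<forall>i<N. cmod (ip ((u t \<circ> R x \<circ> adjoint ip (u t)) w0 - (u t \<circ> R y \<circ> adjoint ip (u t)) w0) (z i)) < e"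
      unfolding Ua_def by blast
    have Rw: "(u t \<circ> R p \<circ> adjoint ip (u t)) w0 = u t p" for p
    proof -
      have "(u t \<circ> R p \<circ> adjoint ip (u t)) w0 = u t (R p \<xi>)" unfolding alpha_apply \<xi>_def ..
      also have "R p \<xi> = p" by (simp add: R_def \<xi>\<xi>)
      finally show ?thesis .
    qed
    have hU2: "\<forall>i<N. cmod (ip (u t x - u t y) (z i)) < e" using hU unfolding Rw .
    have "(u t x, u t y) \<in> V"
      unfolding Vd using hU2 u_H1[OF xH] u_H1[OF yH] by blast
    then show "(f x, f y) \<in> U" using V ft by blast
  qed
  then show "\<exists>W\<in>entourages (H1 ip) (weak_basic ip). \<forall>f\<in>range u. \<forall>x y. (x, y) \<in> W \<longrightarrow> (f x, f y) \<in> U"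
    using WE by blast
qed

end



context upg begin

lemma dir1:
  assumes UU: "UEC (H1 ip) (weak_basic ip) (range u)"
  shows "UEC (B1 sc ip) (wot_basic sc ip) ((\<lambda>t. \<lambda>A. u t \<circ> A \<circ> adjoint ip (u t)) ` UNIV)"
  unfolding UEC_def
proof
  fix U assume "U \<in> entourages (B1 sc ip) (wot_basic sc ip)"
  then obtain V where V: "V \<in> wot_basic sc ip" "V \<subseteq> U" unfolding entourages_def by blast
  obtain w z and N :: nat and e where Vd: "V = {(A, B). A \<in> B1 sc ip \<and> B \<in> B1 sc ip \<and>
                          (\<forall>i<N. cmod (ip (A (w i) - B (w i)) (z i)) < e)}"
    and wzH: "\<forall>i<N. w i \<in> H1 ip \<and> z i \<in> H1 ip" and e: "e > 0"
    using V(1) unfolding wot_basic_def mem_Collect_eq by (elim exE conjE) blast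
  define y where "y = (\<lambda>i. if i < N then w i else z (i - N))"
  define \<epsilon> where "\<epsilon> = e / 8"
  have \<epsilon>: "\<epsilon> > 0" using e by (simp add: \<epsilon>_def)
  have yH: "\<forall>i<2*N. y i \<in> H1 ip" using wzH by (simp add: y_def)
  define U0 where "U0 = {(p, q). p \<in> H1 ip \<and> q \<in> H1 ip \<and> (\<forall>i<2*N. cmod (ip (p - q) (y i)) < \<epsilon>)}"
  have "U0 \<in> weak_basic ip"
    unfolding weak_basic_def U0_def
    by (rule CollectI, rule exI[of _ y], rule exI[of _ "2*N"], rule exI[of _ \<epsilon>]) (simp add: yH \<epsilon>)
  then have "U0 \<in> entourages (H1 ip) (weak_basic ip)"
    by (rule ent_intro) (auto simp: U0_def)
  from bspec[OF UU[unfolded UEC_def] this]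
  obtain W0 where W0: "W0 \<in> entourages (H1 ip) (weak_basic ip)"
    and W0P: "\<forall>f\<in>range u. \<forall>p q. (p, q) \<in> W0 \<longrightarrow> (f p, f q) \<in> U0"
    by (elim bexE)
  then obtain V0 where V0: "V0 \<in> weak_basic ip" "V0 \<subseteq> W0" unfolding entourages_def by blast
  obtain f0 and n :: nat and \<delta> where V0d: "V0 = {(p, q). p \<in> H1 ip \<and> q \<in> H1 ip \<and> (\<forall>j<n. cmod (ip (p - q) (f0 j)) < \<delta>)}"
    and fH: "\<forall>j<n. f0 j \<in> H1 ip" and \<delta>: "\<delta> > 0"
    using V0(1) unfolding weak_basic_def mem_Collect_eq by (elim exE conjE) blast
  have K: "cmod (ip p (u t (y i))) < \<epsilon>"
    if pH: "p \<in> H1 ip" and p0: "\<forall>j<n. ip p (f0 j) = 0" and i: "i < 2*N" for p t i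
  proof -
    have zH: "(0::'a) \<in> H1 ip" by (simp add: H1_def hnorm_def)
    have "(p, 0) \<in> V0" unfolding V0d using pH zH p0 \<delta> by simp
    then have pW: "(p, 0) \<in> W0" using V0 by blast
    have "u (-t) \<in> range u" by blast
    from W0P[rule_format, OF this pW] have "(u (-t) p, u (-t) 0) \<in> U0" .
    then have "cmod (ip (u (-t) p - u (-t) 0) (y i)) < \<epsilon>" using i unfolding U0_def by blast
    moreover have "u (-t) 0 = 0" by (rule bop_zero[OF u_bop])
    moreover have "ip (u (-t) p) (y i) = ip p (u t (y i))" using u_adj[of "-t" p "y i"] by simp
    ultimately show ?thesis by simp
  qed
  obtain m E where o: "orthon m E" and spn: "\<forall>v. (\<forall>k<m. ip v (E k) = 0) \<longrightarrow> (\<forall>j<n. ip v (f0 j) = 0)"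
    using gs[of n f0] by blast
  have R: "hnorm ip (u t (y i) - proj m E (u t (y i))) \<le> \<epsilon>" if i: "i < 2*N" for t i
  proof -
    define a where "a = u t (y i)"
    define r where "r = a - proj m E a"
    show ?thesis
    proof (cases "r = 0")
      case True then show ?thesis using \<epsilon> by (simp add: r_def a_def[symmetric] hnorm_def)
    next
      case False
      then have hr: "hnorm ip r > 0" using hnorm_zero_iff[of r] hnorm_nonneg[of r] by linarith
      define c where "c = complex_of_real (1 / hnorm ip r)"
      define p where "p = sc c r"
      have hp: "hnorm ip p = 1" using hr by (simp add: p_def c_def hnorm_sc norm_divide)
      then have pH: "p \<in> H1 ip" by (simp add: H1_def)
      have rE: "\<forall>k<m. ip r (E k) = 0" unfolding r_def using res_orth[OF o] by blast
      then have "\<forall>k<m. ip p (E k) = 0" by (simp add: p_def ip_scL)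
      then have p0: "\<forall>j<n. ip p (f0 j) = 0" using spn by blast
      have Kp: "cmod (ip p a) < \<epsilon>" unfolding a_def by (rule K[OF pH p0 i])
      have "ip r (proj m E a) = 0" by (rule ip_orth_proj[OF rE])
      then have "ip r a = ip r r"
        using ip_addR[of r r "proj m E a"] by (simp add: r_def)
      then have "ip p a = c * complex_of_real ((hnorm ip r)^2)"
        by (simp add: p_def ip_scL ip_self_hnorm)
      then have "cmod (ip p a) = hnorm ip r" using hr
        by (simp add: c_def norm_mult norm_divide power2_eq_square)
      then show ?thesis using Kp by (simp add: r_def a_def)
    qed
  qed
  define \<delta>' where "\<delta>' = e / (2 * (real (m * m) + 1))"
  have mm: "0 \<le> real (m * m)" by simp
  have p1: "0 < real (m * m) + 1" by (rule add_nonneg_pos[OF mm]) simp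
  have "0 < 2 * (real (m * m) + 1)" by (rule mult_pos_pos[OF _ p1]) simp
  then have \<delta>': "\<delta>' > 0" unfolding \<delta>'_def using e by (rule divide_pos_pos[rotated])
  define Wa where "Wa = {(A, B). A \<in> B1 sc ip \<and> B \<in> B1 sc ip \<and>
       (\<forall>i<m*m. cmod (ip (A ((\<lambda>i. E (i div m)) i) - B ((\<lambda>i. E (i div m)) i)) ((\<lambda>i. E (i mod m)) i)) < \<delta>')}"
  have EH: "E k \<in> H1 ip" if "k < m" for k using orthon_hnorm[OF o that] by (simp add: H1_def)
  have "\<forall>i<m*m. E (i div m) \<in> H1 ip \<and> E (i mod m) \<in> H1 ip"
  proof (intro allI impI conjI)
    fix i assume i: "i < m * m"
    then have m0: "m > 0" by (cases m) auto
    show "E (i div m) \<in> H1 ip" using i m0 by (intro EH) (simp add: div_less_iff_less_mult)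
    show "E (i mod m) \<in> H1 ip" using m0 by (intro EH) simp
  qed
  then have "Wa \<in> wot_basic sc ip"
    unfolding wot_basic_def Wa_def
    by (intro CollectI exI[of _ "\<lambda>i. E (i div m)"] exI[of _ "\<lambda>i. E (i mod m)"] exI[of _ "m*m"] exI[of _ \<delta>'])
       (simp add: \<delta>')
  then have WaE: "Wa \<in> entourages (B1 sc ip) (wot_basic sc ip)"
    by (rule ent_intro) (auto simp: Wa_def)
  have "\<forall>f\<in>(\<lambda>t. \<lambda>A. u t \<circ> A \<circ> adjoint ip (u t)) ` UNIV. \<forall>A B. (A, B) \<in> Wa \<longrightarrow> (f A, f B) \<in> U"
  proof (intro ballI allI impI)
    fix f A B assume f: "f \<in> (\<lambda>t. \<lambda>A. u t \<circ> A \<circ> adjoint ip (u t)) ` UNIV" and AB: "(A, B) \<in> Wa"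
    then obtain t where ft: "f = (\<lambda>A. u t \<circ> A \<circ> adjoint ip (u t))" by blast
    have AB1: "A \<in> B1 sc ip" "B \<in> B1 sc ip" and ABs: "\<forall>i<m*m. cmod (ip (A (E (i div m)) - B (E (i div m))) (E (i mod m))) < \<delta>'"
      using AB by (auto simp: Wa_def)
    have hlk: "\<forall>l<m. \<forall>k<m. cmod (ip (A (E l) - B (E l)) (E k)) \<le> \<delta>'"
    proof (intro allI impI)
      fix l k assume l: "l < m" and k: "k < m"
      have "l * m + k < m * m"
      proof -
        have "l * m + k < l * m + m" using k by simp
        also have "\<dots> = (l + 1) * m" by simp
        also have "\<dots> \<le> m * m" using l by (intro mult_right_mono) auto
        finally show ?thesis .
      qed
      moreover have "(l * m + k) div m = l" and "(l * m + k) mod m = k" using k by auto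
      ultimately show "cmod (ip (A (E l) - B (E l)) (E k)) \<le> \<delta>'" using ABs
        by (metis less_imp_le)
    qed
    have in1: "f A \<in> B1 sc ip" "f B \<in> B1 sc ip" using alpha_B1[OF AB1(1)] alpha_B1[OF AB1(2)] ft by simp_all
    have "\<forall>i<N. cmod (ip (f A (w i) - f B (w i)) (z i)) < e"
    proof (intro allI impI)
      fix i assume i: "i < N"
      define a where "a = u (-t) (w i)"
      define b where "b = u (-t) (z i)"
      have ya: "u (-t) (y i) = a" using i by (simp add: y_def a_def)
      have yb: "u (-t) (y (N + i)) = b" by (simp add: y_def b_def)
      have ra: "hnorm ip (a - proj m E a) \<le> \<epsilon>" using R[of i "-t"] i ya by simp
      have rb: "hnorm ip (b - proj m E b) \<le> \<epsilon>" using R[of "N + i" "-t"] i yb by simp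
      have ha: "hnorm ip a \<le> 1" using wzH i by (simp add: a_def u_hnorm H1_def)
      have hb: "hnorm ip b \<le> 1" using wzH i by (simp add: b_def u_hnorm H1_def)
      have "f A (w i) - f B (w i) = u t (A a) - u t (B a)" by (simp add: ft adj_u a_def)
      also have "\<dots> = u t (A a - B a)" by (rule bop_diff[OF u_bop, symmetric])
      finally have "ip (f A (w i) - f B (w i)) (z i) = ip (A a - B a) b" by (simp add: u_adj b_def)
      moreover have "cmod (ip (A a - B a) b) \<le> 4 * \<epsilon> + real (m * m) * \<delta>'"
        by (rule est[OF AB1 o ha hb ra rb hlk])
      moreover have "4 * \<epsilon> + real (m * m) * \<delta>' < e"
      proof -
        have "real (m * m) * \<delta>' = e / 2 * (real (m * m) / (real (m * m) + 1))"
          by (simp add: \<delta>'_def field_simps)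
        also have "\<dots> < e / 2 * 1"
        proof (rule mult_strict_left_mono)
          show "real (m * m) / (real (m * m) + 1) < 1" using p1 by (simp add: divide_less_eq)
          show "0 < e / 2" using e by simp
        qed
        finally show ?thesis by (simp add: \<epsilon>_def)
      qed
      ultimately show "cmod (ip (f A (w i) - f B (w i)) (z i)) < e" by simp
    qed
    then have "(f A, f B) \<in> V" unfolding Vd using in1 by blast
    then show "(f A, f B) \<in> U" using V by blast
  qed
  then show "\<exists>W\<in>entourages (B1 sc ip) (wot_basic sc ip). \<forall>f\<in>(\<lambda>t. \<lambda>A. u t \<circ> A \<circ> adjoint ip (u t)) ` UNIV.
               \<forall>x y. (x, y) \<in> W \<longrightarrow> (f x, f y) \<in> U"
    using WaE by blast
qed

end


theorem mainTheorem3: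
  fixes sc :: "complex \<Rightarrow> 'h::ab_group_add \<Rightarrow> 'h"
    and ip :: "'h \<Rightarrow> 'h \<Rightarrow> complex"
    and u :: "real \<Rightarrow> 'h \<Rightarrow> 'h"
  assumes "hilbert_space sc ip"
    and "separable_hs ip"
    and "infinite_dimensional sc"
    and "one_param_unitary_group sc ip u"
  shows "UEC (H1 ip) (weak_basic ip) (range u) \<longleftrightarrow>
         UEC (B1 sc ip) (wot_basic sc ip)
             ((\<lambda>t. \<lambda>A. u t \<circ> A \<circ> adjoint ip (u t)) ` UNIV)"
proof -
  interpret upg sc ip u using assms(1,4) by (simp add: upg_def upg_axioms_def hs_def)
  have "\<exists>x::'h. x \<noteq> 0"
  proof (rule ccontr)
    assume "\<not> (\<exists>x::'h. x \<noteq> 0)"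
    then have all0: "y = (0::'h)" for y by simp
    have "module.span sc ({}::'h set) = {0}" by (rule span_empty)
    moreover have "{0::'h} = UNIV" using all0 by blast
    ultimately have "module.span sc ({}::'h set) = UNIV" by simp
    then show False using assms(3) unfolding infinite_dimensional_def by blast
  qed
  then obtain x where x: "x \<noteq> (0::'h)" by blast
  then have hx: "hnorm ip x > 0" using hnorm_zero_iff[of x] hnorm_nonneg[of x] by linarith
  define w0 where "w0 = sc (complex_of_real (1 / hnorm ip x)) x"
  have w0: "hnorm ip w0 = 1" using hx by (simp add: w0_def hnorm_sc norm_divide)
  show ?thesis
  proof
    assume "UEC (H1 ip) (weak_basic ip) (range u)"
    then show "UEC (B1 sc ip) (wot_basic sc ip) ((\<lambda>t. \<lambda>A. u t \<circ> A \<circ> adjoint ip (u t)) ` UNIV)"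
      by (rule dir1)
  next
    assume "UEC (B1 sc ip) (wot_basic sc ip) ((\<lambda>t. \<lambda>A. u t \<circ> A \<circ> adjoint ip (u t)) ` UNIV)"
    then show "UEC (H1 ip) (weak_basic ip) (range u)" by (rule dir2[OF _ w0])
  qed
qed

end
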